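(* Let $\mathcal{X}$ be a finite nonempty set of types and $\Phi=(\Phi_{xy})_{x,y\in\mathcal{X}}$ a real matrix with $\Phi_{xy}=\Phi_{yx}$. Let $(n^k)_{k\ge1}$ be a sequence of vectors of nonnegative integers with $N^k=\sum_x n^k_x\to\infty$ and $n^k_x/N^k\to f_x$ for each $x$. Then there exist integer vectors $m^k$ with $0\le m^k_x\le n^k_x$ and stable outcomes $(\mu^k,u^k)$ of the roommate problem with population $m^k$ and surplus $\Phi$ such that: (i) $\bigl(N^k-\sum_x m^k_x\bigr)/N^k\to0$ (the removed subpopulation is asymptotically negligible), and (ii) the average cost per individual of compensating the removed individuals with the payoff of their type tends to zero: $\frac{1}{N^k}\sum_x (n^k_x-m^k_x)u^k_x\to0$.
   Context: Roommate matching with transferable utility for population $m=(m_x)$: $m_x$ individuals of type $x$; a pair of types $\{x,y\}$ (possibly $x=y$) generates surplus $\Phi_{xy}$; singles get $0$. Feasible roommate matchings $\mathcal{P}(m)=\{\mu\in\mathbb{N}^{\mathcal{X}\times\mathcal{X}}:\ \mu_{xy}=\mu_{yx},\ 2\mu_{xx}+\sum_{y\ne x}\mu_{xy}\le m_x\ \forall x\}$; total surplus $S_R(\mu;\Phi)=\sum_x\mu_{xx}\Phi_{xx}+\sum_{x\ne y}\mu_{xy}\Phi_{xy}/2$. An outcome is $(\mu,u)$ with $\mu\in\mathcal{P}(m)$, $u\in\mathbb{R}^{\mathcal{X}}$, $\sum_x m_xu_x=S_R(\mu;\Phi)$; it is stable if $u_x\ge0$ and $u_x+u_y\ge\Phi_{xy}$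 for all $x,y\in\mathcal{X}$. *)

theory Defs
  imports Complex_Main
begin

definition feasible_roommate :: "('x::finite \<Rightarrow> nat) \<Rightarrow> ('x \<Rightarrow> 'x \<Rightarrow> nat) \<Rightarrow> bool" where
  "feasible_roommate m \<mu> \<longleftrightarrow>
     (\<forall>x y. \<mu> x y = \<mu> y x) \<and>
     (\<forall>x. 2 * \<mu> x x + (\<Sum>y\<in>UNIV - {x}. \<mu> x y) \<le> m x)"

definition roommate_surplus :: "('x::finite \<Rightarrow> 'x \<Rightarrow> nat) \<Rightarrow> ('x \<Rightarrow> 'x \<Rightarrow> real) \<Rightarrow> real" where
  "roommate_surplus \<mu> \<Phi> =
     (\<Sum>x\<in>UNIV. real (\<mu> x x) * \<Phi> x x) +
     (\<Sum>p\<in>{(x, y). x \<noteq> y}. real (\<mu> (fst p) (snd p)) * \<Phi> (fst p) (snd p) / 2)"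

definition roommate_outcome ::
  "('x::finite \<Rightarrow> nat) \<Rightarrow> ('x \<Rightarrow> 'x \<Rightarrow> real) \<Rightarrow> ('x \<Rightarrow> 'x \<Rightarrow> nat) \<Rightarrow> ('x \<Rightarrow> real) \<Rightarrow> bool" where
  "roommate_outcome m \<Phi> \<mu> u \<longleftrightarrow>
     feasible_roommate m \<mu> \<and> (\<Sum>x\<in>UNIV. real (m x) * u x) = roommate_surplus \<mu> \<Phi>"

definition stable_roommate_outcome ::
  "('x::finite \<Rightarrow> nat) \<Rightarrow> ('x \<Rightarrow> 'x \<Rightarrow> real) \<Rightarrow> ('x \<Rightarrow> 'x \<Rightarrow> nat) \<Rightarrow> ('x \<Rightarrow> real) \<Rightarrow> bool" where
  "stable_roommate_outcome m \<Phi> \<mu> u \<longleftrightarrow>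
     roommate_outcome m \<Phi> \<mu> u \<and> (\<forall>x. u x \<ge> 0) \<and> (\<forall>x y. u x + u y \<ge> \<Phi> x y)"

end

theory Submission imports Defs "HOL-Analysis.Analysis" begin

lemma ev_helper:
  fixes s d :: real
  assumes "s \<ge> 0" "s = 0 \<Longrightarrow> d \<ge> 0"
  shows "eventually (\<lambda>e. 0 \<le> s + e * d) (at_right 0)"
proof (cases "s = 0")
  case True
  show ?thesis using eventually_at_right_less[of "0::real"]
    by (rule eventually_mono) (use True assms in auto)
next
  case False
  then have "s > 0" using assms by auto
  have "((\<lambda>e. s + e * d) \<longlongrightarrow> s + 0 * d) (at_right 0)"
    by (intro tendsto_intros)
  then have "((\<lambda>e. s + e * d) \<longlongrightarrow> s) (at_right 0)" by simp
  from order_tendstoD(1)[OF this \<open>s > 0\<close>] show ?thesis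
    by (rule eventually_mono) auto
qed

lemma kkt:
  fixes \<Phi> :: "'x::finite \<Rightarrow> 'x \<Rightarrow> real" and b :: "'x \<Rightarrow> real"
  assumes bnn: "\<And>x. b x \<ge> 0"
  shows "\<exists>u L V. (\<forall>x. 0 \<le> u x \<and> u x \<le> (\<Sum>x\<in>UNIV. \<Sum>y\<in>UNIV. \<bar>\<Phi> x y\<bar>)) \<and> (\<forall>x y. \<Phi> x y \<le> u x + u y) \<and>
     (\<forall>p. 0 \<le> L p \<and> (L p \<noteq> 0 \<longrightarrow> u (fst p) + u (snd p) = \<Phi> (fst p) (snd p))) \<and>
     (\<forall>x. 0 \<le> V x \<and> (V x \<noteq> 0 \<longrightarrow> u x = 0)) \<and>
     (\<forall>x. b x = (\<Sum>y\<in>UNIV. L (x,y) + L (y,x)) + V x)"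
proof -
  define C where "C = (\<Sum>x\<in>UNIV. \<Sum>y\<in>UNIV. \<bar>\<Phi> x y\<bar>)"
  have C: "\<bar>\<Phi> x y\<bar> \<le> C" for x y
  proof -
    have "\<bar>\<Phi> x y\<bar> \<le> (\<Sum>y\<in>UNIV. \<bar>\<Phi> x y\<bar>)" by (rule member_le_sum) auto
    also have "\<dots> \<le> C" unfolding C_def by (rule member_le_sum) (auto intro: sum_nonneg)
    finally show ?thesis .
  qed
  have C0: "C \<ge> 0" unfolding C_def by (auto intro!: sum_nonneg)
  define DC :: "(real^'x) set" where
    "DC = {v. (\<forall>x. 0 \<le> v$x \<and> v$x \<le> C) \<and> (\<forall>x y. \<Phi> x y \<le> v$x + v$y)}"
  have DCeq: "DC = cbox 0 (\<chi> x. C) \<inter> {v. \<forall>x y. \<Phi> x y \<le> v$x + v$y}"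
    unfolding DC_def by (auto simp: mem_box_cart)
  have "closed {v::real^'x. \<forall>x y. \<Phi> x y \<le> v$x + v$y}"
    by (intro closed_Collect_all closed_Collect_le continuous_intros)
  then have cDC: "compact DC" unfolding DCeq
    by (intro compact_Int_closed compact_cbox)
  have neDC: "DC \<noteq> {}"
  proof -
    have "(\<chi> x. C) \<in> DC" unfolding DC_def using C0 C by (auto simp: abs_le_iff) (smt (verit) C)
    then show ?thesis by auto
  qed
  define bf where "bf = (\<lambda>v::real^'x. \<Sum>x\<in>UNIV. b x * v$x)"
  have "continuous_on DC bf" unfolding bf_def by (intro continuous_intros)
  from continuous_attains_inf[OF cDC neDC this] obtain u0 where
    u0: "u0 \<in> DC" and u0min: "\<And>w. w \<in> DC \<Longrightarrow> bf u0 \<le> bf w" by blast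
  have minall: "bf u0 \<le> bf v" if v: "\<forall>x. 0 \<le> v$x" "\<forall>x y. \<Phi> x y \<le> v$x + v$y" for v
  proof -
    define w where "w = (\<chi> x. min (v$x) C)"
    have "w \<in> DC" unfolding DC_def w_def using v C C0
      by (auto simp: abs_le_iff min_def) (smt (verit) C)+
    then have "bf u0 \<le> bf w" by (rule u0min)
    also have "bf w \<le> bf v" unfolding bf_def w_def
      by (intro sum_mono mult_left_mono) (auto simp: bnn)
    finally show ?thesis .
  qed
  define P where "P = {p. u0$fst p + u0$snd p = \<Phi> (fst p) (snd p)}"
  define Z where "Z = {x. u0$x = 0}"
  define T :: "(real^'x) set" where "T = {v. \<exists>L V. (\<forall>p. 0 \<le> L p \<and> (L p \<noteq> 0 \<longrightarrow> p \<in> P)) \<and>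
     (\<forall>x. 0 \<le> V x \<and> (V x \<noteq> 0 \<longrightarrow> x \<in> Z)) \<and> (\<forall>x. v$x = (\<Sum>y\<in>UNIV. L (x,y) + L (y,x)) + V x)}"
  define G :: "(real^'x) set" where
    "G = (\<lambda>p. axis (fst p) 1 + axis (snd p) 1) ` P \<union> (\<lambda>x. axis x 1) ` Z"
  have ccT: "convex_cone T"
    unfolding convex_cone_iff
  proof (intro conjI ballI allI impI)
    show "0 \<in> T" unfolding T_def by (rule CollectI, rule exI[of _ "\<lambda>_. 0"], rule exI[of _ "\<lambda>_. 0"]) auto
  next
    fix v w assume "v \<in> T" "w \<in> T"
    then obtain L1 V1 L2 V2 where 1: "(\<forall>p. 0 \<le> L1 p \<and> (L1 p \<noteq> 0 \<longrightarrow> p \<in> P))"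
     "(\<forall>x. 0 \<le> V1 x \<and> (V1 x \<noteq> 0 \<longrightarrow> x \<in> Z))" "(\<forall>x. v$x = (\<Sum>y\<in>UNIV. L1 (x,y) + L1 (y,x)) + V1 x)"
     and 2: "(\<forall>p. 0 \<le> L2 p \<and> (L2 p \<noteq> 0 \<longrightarrow> p \<in> P))"
     "(\<forall>x. 0 \<le> V2 x \<and> (V2 x \<noteq> 0 \<longrightarrow> x \<in> Z))" "(\<forall>x. w$x = (\<Sum>y\<in>UNIV. L2 (x,y) + L2 (y,x)) + V2 x)"
      unfolding T_def by blast
    show "v + w \<in> T" unfolding T_def
      apply (rule CollectI, rule exI[of _ "\<lambda>p. L1 p + L2 p"], rule exI[of _ "\<lambda>x. V1 x + V2 x"])
      using 1 2 by (auto simp: sum.distrib add_nonneg_eq_0_iff)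
  next
    fix v and c :: real assume "v \<in> T" "0 \<le> c"
    then obtain L1 V1 where 1: "(\<forall>p. 0 \<le> L1 p \<and> (L1 p \<noteq> 0 \<longrightarrow> p \<in> P))"
     "(\<forall>x. 0 \<le> V1 x \<and> (V1 x \<noteq> 0 \<longrightarrow> x \<in> Z))" "(\<forall>x. v$x = (\<Sum>y\<in>UNIV. L1 (x,y) + L1 (y,x)) + V1 x)"
      unfolding T_def by blast
    show "c *\<^sub>R v \<in> T" unfolding T_def
      apply (rule CollectI, rule exI[of _ "\<lambda>p. c * L1 p"], rule exI[of _ "\<lambda>x. c * V1 x"])
      using 1 \<open>0 \<le> c\<close> by (auto simp: sum_distrib_left distrib_left)
  qed
  have GT: "G \<subseteq> T"
  proof
    fix g assume "g \<in> G"
    then consider (a) i j where "(i,j) \<in> P" "g = axis i 1 + axis j 1" | (b) i where "i \<in> Z" "g = axis i 1"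
      unfolding G_def by auto
    then show "g \<in> T"
    proof cases
      case a
      have s1: "(\<Sum>y\<in>UNIV. if (x,y) = (i,j) then 1 else 0 :: real) = (if x = i then 1 else 0)" for x
        by (cases "x = i") auto
      have s2: "(\<Sum>y\<in>UNIV. if (y,x) = (i,j) then 1 else 0 :: real) = (if x = j then 1 else 0)" for x
        by (cases "x = j") auto
      show ?thesis unfolding T_def
        apply (rule CollectI, rule exI[of _ "\<lambda>p. if p = (i,j) then 1 else 0"], rule exI[of _ "\<lambda>_. 0"])
        using a by (auto simp: sum.distrib s1 s2 axis_def)
    next
      case b
      show ?thesis unfolding T_def
        apply (rule CollectI, rule exI[of _ "\<lambda>_. 0"], rule exI[of _ "\<lambda>x. if x = i then 1 else 0"])
        using b by (auto simp: axis_def)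
    qed
  qed
  have KT: "convex_cone hull G \<subseteq> T"
    using GT ccT by (rule hull_minimal)
  define b' where "b' = (\<chi> x. b x)"
  have "b' \<in> convex_cone hull G"
  proof (rule ccontr)
    assume nb: "b' \<notin> convex_cone hull G"
    have "finite G" unfolding G_def by auto
    then have "closed (convex_cone hull G)" by (rule closed_convex_cone_hull)
    from separating_hyperplane_closed_point[OF convex_convex_cone_hull this nb]
    obtain a c where ac: "inner a b' < c" "\<And>z. z \<in> convex_cone hull G \<Longrightarrow> inner a z > c" by blast
    have "c < 0" using ac(2)[OF convex_cone_hull_contains_0] by simp
    have nn: "inner a z \<ge> 0" if z: "z \<in> convex_cone hull G" for z
    proof (rule ccontr)
      assume "\<not> inner a z \<ge> 0"
      then have neg: "inner a z < 0" by simp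
      define t where "t = c / inner a z"
      have "t \<ge> 0" unfolding t_def using neg \<open>c < 0\<close> by (simp add: divide_nonpos_neg)
      have "inner a (t *\<^sub>R z) = c" unfolding t_def using neg by simp
      with ac(2)[OF convex_cone_hull_mul[OF z \<open>t \<ge> 0\<close>]] show False by simp
    qed
    have aP: "a$(fst p) + a$(snd p) \<ge> 0" if "p \<in> P" for p
    proof -
      have "axis (fst p) 1 + axis (snd p) 1 \<in> convex_cone hull G"
        using that unfolding G_def by (intro hull_inc) auto
      from nn[OF this] show ?thesis by (simp add: inner_add_right inner_axis)
    qed
    have aZ: "a$x \<ge> 0" if "x \<in> Z" for x
    proof -
      have "axis x 1 \<in> convex_cone hull G"
        using that unfolding G_def by (intro hull_inc) auto
      from nn[OF this] show ?thesis by (simp add: inner_axis)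
    qed
    have ba: "(\<Sum>x\<in>UNIV. b x * a$x) < 0"
      using ac(1) \<open>c < 0\<close> unfolding b'_def by (simp add: inner_vec_def mult.commute)
    have e1: "eventually (\<lambda>e. \<forall>x. 0 \<le> u0$x + e * a$x) (at_right 0)"
    proof (rule eventually_all_finite)
      fix x show "eventually (\<lambda>e. 0 \<le> u0$x + e * a$x) (at_right 0)"
        using u0 aZ[of x] unfolding DC_def Z_def by (intro ev_helper) auto
    qed
    have e2: "eventually (\<lambda>e. \<forall>x y. \<Phi> x y \<le> (u0$x + e * a$x) + (u0$y + e * a$y)) (at_right 0)"
    proof (rule eventually_all_finite)
      fix x show "eventually (\<lambda>e. \<forall>y. \<Phi> x y \<le> (u0$x + e * a$x) + (u0$y + e * a$y)) (at_right 0)"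
      proof (rule eventually_all_finite)
        fix y
        have "eventually (\<lambda>e. 0 \<le> (u0$x + u0$y - \<Phi> x y) + e * (a$x + a$y)) (at_right 0)"
          using u0 aP[of "(x,y)"] unfolding DC_def P_def by (intro ev_helper) auto
        then show "eventually (\<lambda>e. \<Phi> x y \<le> (u0$x + e * a$x) + (u0$y + e * a$y)) (at_right 0)"
          by (rule eventually_mono) (simp add: algebra_simps)
      qed
    qed
    have "eventually (\<lambda>e::real. False) (at_right 0)"
      using e1 e2 eventually_at_right_less[of "0::real"]
    proof eventually_elim
      case (elim e)
      define v where "v = u0 + e *\<^sub>R a"
      have "bf u0 \<le> bf v" by (rule minall) (use elim in \<open>auto simp: v_def\<close>)
      also have "bf v = bf u0 + e * (\<Sum>x\<in>UNIV. b x * a$x)"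
        unfolding bf_def v_def by (simp add: algebra_simps sum.distrib sum_distrib_left)
      finally have "0 \<le> e * (\<Sum>x\<in>UNIV. b x * a$x)" by simp
      with mult_pos_neg[OF \<open>0 < e\<close> ba] show False by simp
    qed
    then show False by simp
  qed
  with KT have "b' \<in> T" by blast
  then obtain L V where LV: "(\<forall>p. 0 \<le> L p \<and> (L p \<noteq> 0 \<longrightarrow> p \<in> P))"
     "(\<forall>x. 0 \<le> V x \<and> (V x \<noteq> 0 \<longrightarrow> x \<in> Z))" "(\<forall>x. b' $x = (\<Sum>y\<in>UNIV. L (x,y) + L (y,x)) + V x)"
    unfolding T_def by blast
  show ?thesis
    apply (rule exI[of _ "\<lambda>x. u0$x"], rule exI[of _ L], rule exI[of _ V])
    using LV u0 unfolding P_def Z_def DC_def b'_def C_def by auto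
qed


lemma nat_floor_bounds:
  fixes t :: real assumes "t \<ge> 0"
  shows "real (nat \<lfloor>t\<rfloor>) \<le> t" "t - 1 \<le> real (nat \<lfloor>t\<rfloor>)" "nat \<lfloor>t\<rfloor> \<noteq> 0 \<Longrightarrow> t \<noteq> 0"
  using assms by (auto simp: of_nat_nat)

lemma step:
  fixes \<Phi> :: "'x::finite \<Rightarrow> 'x \<Rightarrow> real" and n0 :: "'x \<Rightarrow> nat" and u :: "'x \<Rightarrow> real"
  assumes sym: "\<And>x y. \<Phi> x y = \<Phi> y x"
    and hu: "\<forall>x. 0 \<le> u x" "\<forall>x y. \<Phi> x y \<le> u x + u y"
    and hL: "\<forall>p. 0 \<le> L p \<and> (L p \<noteq> 0 \<longrightarrow> u (fst p) + u (snd p) = \<Phi> (fst p) (snd p))"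
    and hV: "\<forall>x. 0 \<le> V x \<and> (V x \<noteq> 0 \<longrightarrow> u x = 0)"
    and hb: "\<forall>x. real (n0 x) = (\<Sum>y\<in>UNIV. L (x,y) + L (y,x)) + V x"
  defines "mu \<equiv> \<lambda>x y. if x = y then nat \<lfloor>L (x,x)\<rfloor> else nat \<lfloor>L (x,y) + L (y,x)\<rfloor>"
  defines "m \<equiv> \<lambda>x. if u x = 0 then n0 x else 2 * mu x x + (\<Sum>y\<in>UNIV-{x}. mu x y)"
  shows "(\<forall>x. m x \<le> n0 x) \<and> stable_roommate_outcome m \<Phi> mu u \<and>
         (\<forall>x. real (n0 x - m x) \<le> real CARD('x) + 2)"
proof -
  define cov where "cov = (\<lambda>x. 2 * mu x x + (\<Sum>y\<in>UNIV-{x}. mu x y))"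
  have Lnn: "0 \<le> L p" for p using hL by blast
  have musym: "mu x y = mu y x" for x y unfolding mu_def by (auto simp: add.commute)
  have nsplit: "real (n0 x) = 2 * L (x,x) + (\<Sum>y\<in>UNIV-{x}. L (x,y) + L (y,x)) + V x" for x
    using hb sum.remove[of UNIV x "\<lambda>y. L (x,y) + L (y,x)"] by simp
  have rcov: "real (cov x) = 2 * real (nat \<lfloor>L (x,x)\<rfloor>) + (\<Sum>y\<in>UNIV-{x}. real (nat \<lfloor>L (x,y) + L (y,x)\<rfloor>))" for x
    unfolding cov_def mu_def by simp
  have covle: "real (cov x) \<le> real (n0 x) - V x" for x
  proof -
    have "(\<Sum>y\<in>UNIV-{x}. real (nat \<lfloor>L (x,y) + L (y,x)\<rfloor>)) \<le> (\<Sum>y\<in>UNIV-{x}. L (x,y) + L (y,x))"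
      by (intro sum_mono nat_floor_bounds) (auto intro: add_nonneg_nonneg Lnn)
    then show ?thesis using rcov[of x] nsplit[of x] nat_floor_bounds(1)[OF Lnn[of "(x,x)"]] by linarith
  qed
  have covge: "real (n0 x) - V x - (real CARD('x) + 1) \<le> real (cov x)" for x
  proof -
    have "(\<Sum>y\<in>UNIV-{x}. L (x,y) + L (y,x) - 1) \<le> (\<Sum>y\<in>UNIV-{x}. real (nat \<lfloor>L (x,y) + L (y,x)\<rfloor>))"
      by (intro sum_mono nat_floor_bounds) (auto intro: add_nonneg_nonneg Lnn)
    moreover have "(\<Sum>y\<in>UNIV-{x}. L (x,y) + L (y,x) - 1) = (\<Sum>y\<in>UNIV-{x}. L (x,y) + L (y,x)) - (real CARD('x) - 1)"
      by (simp add: sum_subtractf card_Diff_singleton of_nat_diff)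
    ultimately show ?thesis using rcov[of x] nsplit[of x] nat_floor_bounds(2)[OF Lnn[of "(x,x)"]] by linarith
  qed
  have covn: "cov x \<le> n0 x" for x using covle[of x] hV by (smt (verit) of_nat_le_iff)
  have mcov: "m x = (if u x = 0 then n0 x else cov x)" for x unfolding m_def cov_def by simp
  have mn: "m x \<le> n0 x" for x using covn by (simp add: mcov)
  have covm: "cov x \<le> m x" for x using covn by (simp add: mcov)
  have diff: "real (n0 x - m x) \<le> real CARD('x) + 2" for x
  proof (cases "u x = 0")
    case True then show ?thesis by (simp add: mcov)
  next
    case False
    then have "V x = 0" using hV by auto
    then show ?thesis using covge[of x] covn[of x] False by (simp add: mcov of_nat_diff)
  qed
  have feas: "feasible_roommate m mu"
    unfolding feasible_roommate_def using covm musym by (auto simp: cov_def)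
  have tightd: "real (mu x x) * \<Phi> x x = 2 * real (mu x x) * u x" for x
  proof (cases "mu x x = 0")
    case False
    then have "L (x,x) \<noteq> 0" unfolding mu_def using nat_floor_bounds(3)[OF Lnn] by auto
    then have "u x + u x = \<Phi> x x" using hL by force
    then show ?thesis by (simp add: algebra_simps)
  qed (simp add: sum_nonneg)
  have tighto: "real (mu x y) * \<Phi> x y = real (mu x y) * (u x + u y)" if "x \<noteq> y" for x y
  proof (cases "mu x y = 0")
    case False
    then have "L (x,y) + L (y,x) \<noteq> 0" unfolding mu_def using that nat_floor_bounds(3)[OF add_nonneg_nonneg[OF Lnn Lnn]] by auto
    then have "L (x,y) \<noteq> 0 \<or> L (y,x) \<noteq> 0" by auto
    then have "u x + u y = \<Phi> x y" using hL sym by (metis add.commute fst_conv snd_conv)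
    then show ?thesis by simp
  qed (simp add: sum_nonneg)
  define S where "S = {(x::'x, y). x \<noteq> y}"
  have SSig: "S = Sigma UNIV (\<lambda>x. UNIV - {x})" unfolding S_def by auto
  define A where "A = (\<Sum>p\<in>S. real (mu (fst p) (snd p)) * u (fst p))"
  define B where "B = (\<Sum>p\<in>S. real (mu (fst p) (snd p)) * u (snd p))"
  have AB: "A = B" unfolding A_def B_def
    by (rule sum.reindex_bij_witness[of _ prod.swap prod.swap]) (auto simp: S_def musym)
  have surpl: "(\<Sum>p\<in>S. real (mu (fst p) (snd p)) * \<Phi> (fst p) (snd p) / 2) = A"
  proof -
    have "(\<Sum>p\<in>S. real (mu (fst p) (snd p)) * \<Phi> (fst p) (snd p) / 2) =
          (\<Sum>p\<in>S. (real (mu (fst p) (snd p)) * u (fst p) + real (mu (fst p) (snd p)) * u (snd p)) / 2)"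
      by (rule sum.cong) (auto simp: S_def tighto distrib_left)
    also have "\<dots> = (A + B) / 2" unfolding A_def B_def by (simp add: sum.distrib flip: sum_divide_distrib)
    finally show ?thesis using AB by simp
  qed
  have Aeq: "A = (\<Sum>x\<in>UNIV. \<Sum>y\<in>UNIV-{x}. real (mu x y) * u x)"
    unfolding A_def SSig by (subst sum.Sigma) (auto simp: case_prod_beta)
  have "(\<Sum>x\<in>UNIV. real (m x) * u x) = (\<Sum>x\<in>UNIV. real (cov x) * u x)"
    by (rule sum.cong) (auto simp: mcov)
  also have "\<dots> = (\<Sum>x\<in>UNIV. 2 * real (mu x x) * u x) + (\<Sum>x\<in>UNIV. \<Sum>y\<in>UNIV-{x}. real (mu x y) * u x)"
    unfolding cov_def by (simp add: sum.distrib algebra_simps sum_distrib_left sum_distrib_right)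
  also have "\<dots> = roommate_surplus mu \<Phi>"
    unfolding roommate_surplus_def using surpl Aeq by (simp add: S_def tightd)
  finally have "(\<Sum>x\<in>UNIV. real (m x) * u x) = roommate_surplus mu \<Phi>" .
  then have "stable_roommate_outcome m \<Phi> mu u"
    unfolding stable_roommate_outcome_def roommate_outcome_def using feas hu by auto
  then show ?thesis using mn diff by auto
qed


lemma bound_lim:
  fixes E N :: "nat \<Rightarrow> real" and B :: real
  assumes N_inf: "filterlim N at_top sequentially"
    and "\<And>k. 0 \<le> E k" "\<And>k. E k \<le> B" "\<And>k. 0 \<le> N k"
  shows "(\<lambda>k. E k / N k) \<longlonglongrightarrow> 0"
proof (rule Lim_null_comparison)
  show "(\<lambda>k. B / N k) \<longlonglongrightarrow> 0"
    by (rule tendsto_divide_0[OF tendsto_const filterlim_at_top_imp_at_infinity[OF N_inf]])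
  show "\<forall>\<^sub>F k in sequentially. norm (E k / N k) \<le> B / N k"
    using assms(2-4) by (intro always_eventually allI) (simp add: divide_right_mono)
qed

theorem proposition3:
  fixes \<Phi> :: "'x::finite \<Rightarrow> 'x \<Rightarrow> real"
    and n :: "nat \<Rightarrow> 'x \<Rightarrow> nat"
    and f :: "'x \<Rightarrow> real"
  assumes sym: "\<And>x y. \<Phi> x y = \<Phi> y x"
    and N_inf: "filterlim (\<lambda>k. real (\<Sum>x\<in>UNIV. n k x)) at_top sequentially"
    and freq: "\<And>x. (\<lambda>k. real (n k x) / real (\<Sum>z\<in>UNIV. n k z)) \<longlonglongrightarrow> f x"
  shows "\<exists>(m :: nat \<Rightarrow> 'x \<Rightarrow> nat) (\<mu> :: nat \<Rightarrow> 'x \<Rightarrow> 'x \<Rightarrow> nat) (u :: nat \<Rightarrow> 'x \<Rightarrow> real).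
           (\<forall>k x. m k x \<le> n k x) \<and>
           (\<forall>k. stable_roommate_outcome (m k) \<Phi> (\<mu> k) (u k)) \<and>
           (\<lambda>k. (real (\<Sum>x\<in>UNIV. n k x) - real (\<Sum>x\<in>UNIV. m k x)) / real (\<Sum>x\<in>UNIV. n k x))
              \<longlonglongrightarrow> 0 \<and>
           (\<lambda>k. (\<Sum>x\<in>UNIV. real (n k x - m k x) * u k x) / real (\<Sum>x\<in>UNIV. n k x))
              \<longlonglongrightarrow> 0"
proof -
  define C where "C = (\<Sum>x\<in>UNIV. \<Sum>y\<in>UNIV. \<bar>\<Phi> x y\<bar>)"
  define Q where "Q = (\<lambda>k (t :: ('x \<Rightarrow> real) \<times> ('x \<times> 'x \<Rightarrow> real) \<times> ('x \<Rightarrow> real)).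
     (\<forall>x. 0 \<le> fst t x \<and> fst t x \<le> C) \<and> (\<forall>x y. \<Phi> x y \<le> fst t x + fst t y) \<and>
     (\<forall>p. 0 \<le> fst (snd t) p \<and> (fst (snd t) p \<noteq> 0 \<longrightarrow> fst t (fst p) + fst t (snd p) = \<Phi> (fst p) (snd p))) \<and>
     (\<forall>x. 0 \<le> snd (snd t) x \<and> (snd (snd t) x \<noteq> 0 \<longrightarrow> fst t x = 0)) \<and>
     (\<forall>x. real (n k x) = (\<Sum>y\<in>UNIV. fst (snd t) (x,y) + fst (snd t) (y,x)) + snd (snd t) x))"
  have "\<forall>k. \<exists>t. Q k t"
  proof
    fix k
    from kkt[of "\<lambda>x. real (n k x)" \<Phi>] obtain u L V where
      "(\<forall>x. 0 \<le> u x \<and> u x \<le> C) \<and> (\<forall>x y. \<Phi> x y \<le> u x + u y) \<and>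
     (\<forall>p. 0 \<le> L p \<and> (L p \<noteq> 0 \<longrightarrow> u (fst p) + u (snd p) = \<Phi> (fst p) (snd p))) \<and>
     (\<forall>x. 0 \<le> V x \<and> (V x \<noteq> 0 \<longrightarrow> u x = 0)) \<and>
     (\<forall>x. real (n k x) = (\<Sum>y\<in>UNIV. L (x,y) + L (y,x)) + V x)"
      unfolding C_def by auto
    then have "Q k (u, L, V)" unfolding Q_def by simp
    then show "\<exists>t. Q k t" ..
  qed
  then obtain F where F: "\<And>k. Q k (F k)" by (metis choice)
  define U where "U = (\<lambda>k. fst (F k))"
  define LL where "LL = (\<lambda>k. fst (snd (F k)))"
  define VV where "VV = (\<lambda>k. snd (snd (F k)))"
  have H: "(\<forall>x. 0 \<le> U k x \<and> U k x \<le> C) \<and> (\<forall>x y. \<Phi> x y \<le> U k x + U k y) \<and>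
     (\<forall>p. 0 \<le> LL k p \<and> (LL k p \<noteq> 0 \<longrightarrow> U k (fst p) + U k (snd p) = \<Phi> (fst p) (snd p))) \<and>
     (\<forall>x. 0 \<le> VV k x \<and> (VV k x \<noteq> 0 \<longrightarrow> U k x = 0)) \<and>
     (\<forall>x. real (n k x) = (\<Sum>y\<in>UNIV. LL k (x,y) + LL k (y,x)) + VV k x)" for k
    using F[of k] unfolding Q_def U_def LL_def VV_def by simp
  define mu where "mu = (\<lambda>k x y. if x = y then nat \<lfloor>LL k (x,x)\<rfloor> else nat \<lfloor>LL k (x,y) + LL k (y,x)\<rfloor>)"
  define m where "m = (\<lambda>k x. if U k x = 0 then n k x else 2 * mu k x x + (\<Sum>y\<in>UNIV-{x}. mu k x y))"
  have S: "(\<forall>x. m k x \<le> n k x) \<and> stable_roommate_outcome (m k) \<Phi> (mu k) (U k) \<and>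
         (\<forall>x. real (n k x - m k x) \<le> real CARD('x) + 2)" for k
    unfolding m_def mu_def
    by (rule step[of \<Phi> "U k" "LL k" "VV k" "n k"]) (use sym H[of k] in auto)
  define K0 where "K0 = real CARD('x) + 2"
  have mn: "m k x \<le> n k x" for k x using S by blast
  have dk: "real (n k x - m k x) \<le> K0" for k x using S unfolding K0_def by blast
  have e1: "real (\<Sum>x\<in>UNIV. n k x) - real (\<Sum>x\<in>UNIV. m k x) = (\<Sum>x\<in>UNIV. real (n k x - m k x))" for k
    using mn by (simp add: of_nat_diff sum_subtractf)
  have "(\<lambda>k. (\<Sum>x\<in>UNIV. real (n k x - m k x)) / real (\<Sum>x\<in>UNIV. n k x)) \<longlonglongrightarrow> 0"
  proof (rule bound_lim[OF N_inf])
    fix k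
    show "0 \<le> (\<Sum>x\<in>UNIV. real (n k x - m k x))" by (simp add: sum_nonneg)
    show "(\<Sum>x\<in>UNIV. real (n k x - m k x)) \<le> real CARD('x) * K0"
      using sum_mono[of UNIV "\<lambda>x. real (n k x - m k x)" "\<lambda>_. K0"] dk by simp
  qed (simp add: sum_nonneg)
  then have L1: "(\<lambda>k. (real (\<Sum>x\<in>UNIV. n k x) - real (\<Sum>x\<in>UNIV. m k x)) / real (\<Sum>x\<in>UNIV. n k x)) \<longlonglongrightarrow> 0"
    unfolding e1 .
  have L2: "(\<lambda>k. (\<Sum>x\<in>UNIV. real (n k x - m k x) * U k x) / real (\<Sum>x\<in>UNIV. n k x)) \<longlonglongrightarrow> 0"
  proof (rule bound_lim[OF N_inf])
    fix k
    show "0 \<le> (\<Sum>x\<in>UNIV. real (n k x - m k x) * U k x)" using H[of k] by (auto intro!: sum_nonneg)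
    have "real (n k x - m k x) * U k x \<le> K0 * C" for x
      using H[of k] dk[of k x] by (intro mult_mono) auto
    then show "(\<Sum>x\<in>UNIV. real (n k x - m k x) * U k x) \<le> real CARD('x) * (K0 * C)"
      using sum_mono[of UNIV "\<lambda>x. real (n k x - m k x) * U k x" "\<lambda>_. K0 * C"] by simp
  qed (simp add: sum_nonneg)
  show ?thesis
    apply (rule exI[of _ m], rule exI[of _ mu], rule exI[of _ U])
    using mn S L1 L2 by blast
qed

end
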